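(* A maximal product two-action game with $m$ players has exactly $\frac12\bigl(V(m)+!m\bigr)$ Nash equilibria, where $V(m)=\sum_{l=0}^m\binom{m}{l}2^l\cdot!(m-l)$.
   Context: Fix an integer $m\ge 1$ and $\mathcal A=\{1,\dots,m\}$. A two-action game is a finite game in normal form with player set $\mathcal A$ in which each player $i$ has exactly two pure strategies $s^i_0,s^i_1$, together with utility functions $U^i:S\to\mathbb R$, where $S=\prod_{i\in\mathcal A}\{s^i_0,s^i_1\}$. A mixed strategy combination is identified with $\underline\gamma=(\gamma^1,\dots,\gamma^m)\in[0,1]^m$, where $\gamma^i$ is the probability with which player $i$ plays $s^i_1$. The expected utility $V^i$ is the multilinear extension $V^i(\underline\gamma)=\sum_{(j_1,\dots,j_m)\in\{0,1\}^m}\prod_{k=1}^m p_k(j_k)\,U^i(s^1_{j_1},\dots,s^m_{j_m})$ with $p_k(1)=\gamma^k$, $p_k(0)=1-\gamma^k$. Write $\underline\gamma^{-i}=(\gamma^j)_{j\ne i}$ and $\lambda^i(\underline\gamma^{-i}):=V^i(\underline\gamma)|_{\gamma^i=1}-V^i(\underline\gamma)|_{\gamma^i=0}$. A Nash equilibrium is a point $\underline\gamma\in[0,1]^m$ such that for every $i$: $\lambda^i(\underline\gamma^{-i})=0$ if $0<\gamma^i<1$; $\lambda^i(\underline\gamma^{-i})\le 0$ if $\gamma^i=0$; $\lambda^i(\underline\gamma^{-i})\ge 0$ if $\gamma^i=1$. For $\underline\gamma$ put $L(\underline\gamma)=\{i:\gamma^i\in\{0,1\}\}$. A two-action game is a product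 two-action game if there exist $\underline v=(v_1,\dots,v_m)\in\{0,1\}^m$ and numbers $a^i_j\in(0,1)$ for $i,j\in\mathcal A$, $i\ne j$, with $a^{i_1}_j\neq a^{i_2}_j$ whenever $i_1\neq i_2$ and both differ from $j$, such that $\lambda^i(\underline\gamma^{-i})=(-1)^{v_i}\prod_{j\in\mathcal A\setminus\{i\}}(\gamma^j-a^i_j)$ for every $i\in\mathcal A$. For $\pi\in S_m$, $F(\pi)=\{i:\pi(i)=i\}$; $\mathrm{Der}_m=\{\pi\in S_m: F(\pi)=\emptyset\}$; $!n$ is the number of derangements of an $n$-element set ($!0=1$). $EC(\pi):=\{\underline\gamma\in[0,1]^m \mid L(\underline\gamma)=F(\pi),\ \gamma^j=a^{\pi(j)}_j \text{ for all } j\notin F(\pi)\}$. A product two-action game is maximal if for every $\pi\in S_m\setminus\mathrm{Der}_m$ exactly half of the elements of $EC(\pi)$ are Nash equilibria. *)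

theory Defs
  imports Complex_Main "HOL-Library.FuncSet" "HOL-Combinatorics.Permutations"
begin

text \<open>Pure strategy s^i_j is identified with j in {0,1};
 a pure profile is an element of {1..m} ->E {0,1}.\<close>

definition players :: "nat \<Rightarrow> nat set" where
  "players m = {1..m}"

definition pure_profiles :: "nat \<Rightarrow> (nat \<Rightarrow> nat) set" where
  "pure_profiles m = players m \<rightarrow>\<^sub>E {0, 1}"

definition mixed_profiles :: "nat \<Rightarrow> (nat \<Rightarrow> real) set" where
  "mixed_profiles m = players m \<rightarrow>\<^sub>E {0..1}"

definition exp_util :: "nat \<Rightarrow> (nat \<Rightarrow> (nat \<Rightarrow> nat) \<Rightarrow> real) \<Rightarrow> nat \<Rightarrow> (nat \<Rightarrow> real) \<Rightarrow> real" where
  "exp_util m U i \<gamma> =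
     (\<Sum>s\<in>pure_profiles m. (\<Prod>k\<in>players m. (if s k = 1 then \<gamma> k else 1 - \<gamma> k)) * U i s)"

definition lam :: "nat \<Rightarrow> (nat \<Rightarrow> (nat \<Rightarrow> nat) \<Rightarrow> real) \<Rightarrow> nat \<Rightarrow> (nat \<Rightarrow> real) \<Rightarrow> real" where
  "lam m U i \<gamma> = exp_util m U i (\<gamma>(i := 1)) - exp_util m U i (\<gamma>(i := 0))"

definition nash :: "nat \<Rightarrow> (nat \<Rightarrow> (nat \<Rightarrow> nat) \<Rightarrow> real) \<Rightarrow> (nat \<Rightarrow> real) \<Rightarrow> bool" where
  "nash m U \<gamma> \<longleftrightarrow> \<gamma> \<in> mixed_profiles m \<and>
     (\<forall>i\<in>players m.
        (0 < \<gamma> i \<and> \<gamma> i < 1 \<longrightarrow> lam m U i \<gamma> = 0) \<and>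
        (\<gamma> i = 0 \<longrightarrow> lam m U i \<gamma> \<le> 0) \<and>
        (\<gamma> i = 1 \<longrightarrow> lam m U i \<gamma> \<ge> 0))"

definition Lset :: "nat \<Rightarrow> (nat \<Rightarrow> real) \<Rightarrow> nat set" where
  "Lset m \<gamma> = {i \<in> players m. \<gamma> i \<in> {0, 1}}"

definition is_product_game ::
  "nat \<Rightarrow> (nat \<Rightarrow> (nat \<Rightarrow> nat) \<Rightarrow> real) \<Rightarrow> (nat \<Rightarrow> nat) \<Rightarrow> (nat \<Rightarrow> nat \<Rightarrow> real) \<Rightarrow> bool" where
  "is_product_game m U v a \<longleftrightarrow>
     (\<forall>i\<in>players m. v i \<in> {0, 1}) \<and>
     (\<forall>i\<in>players m. \<forall>j\<in>players m. i \<noteq> j \<longrightarrow> 0 < a i j \<and> a i j < 1) \<and>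
     (\<forall>j\<in>players m. \<forall>i1\<in>players m. \<forall>i2\<in>players m.
        i1 \<noteq> i2 \<and> i1 \<noteq> j \<and> i2 \<noteq> j \<longrightarrow> a i1 j \<noteq> a i2 j) \<and>
     (\<forall>i\<in>players m. \<forall>\<gamma>\<in>mixed_profiles m.
        lam m U i \<gamma> = (-1) ^ (v i) * (\<Prod>j\<in>players m - {i}. (\<gamma> j - a i j)))"

definition product_game :: "nat \<Rightarrow> (nat \<Rightarrow> (nat \<Rightarrow> nat) \<Rightarrow> real) \<Rightarrow> bool" where
  "product_game m U \<longleftrightarrow> (\<exists>v a. is_product_game m U v a)"

definition fixpts :: "nat \<Rightarrow> (nat \<Rightarrow> nat) \<Rightarrow> nat set" where
  "fixpts m \<pi> = {i \<in> players m. \<pi> i = i}"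

definition EC :: "nat \<Rightarrow> (nat \<Rightarrow> nat \<Rightarrow> real) \<Rightarrow> (nat \<Rightarrow> nat) \<Rightarrow> (nat \<Rightarrow> real) set" where
  "EC m a \<pi> = {\<gamma> \<in> mixed_profiles m. Lset m \<gamma> = fixpts m \<pi> \<and>
       (\<forall>j\<in>players m - fixpts m \<pi>. \<gamma> j = a (\<pi> j) j)}"

definition maximal_product_game :: "nat \<Rightarrow> (nat \<Rightarrow> (nat \<Rightarrow> nat) \<Rightarrow> real) \<Rightarrow> bool" where
  "maximal_product_game m U \<longleftrightarrow> (\<exists>v a. is_product_game m U v a \<and>
     (\<forall>\<pi>. \<pi> permutes players m \<and> fixpts m \<pi> \<noteq> {} \<longrightarrow>
        2 * card {\<gamma> \<in> EC m a \<pi>. nash m U \<gamma>} = card (EC m a \<pi>)))"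

definition subfact :: "nat \<Rightarrow> nat" where
  "subfact n = card {\<pi>. \<pi> permutes {1..n} \<and> (\<forall>i\<in>{1..n}. \<pi> i \<noteq> i)}"

definition Vcount :: "nat \<Rightarrow> nat" where
  "Vcount m = (\<Sum>l=0..m. (m choose l) * 2 ^ l * subfact (m - l))"

end

theory Submission
  imports Defs
begin

lemma derange_card:
  assumes "finite T"
  shows "card {\<pi>. \<pi> permutes T \<and> (\<forall>x\<in>T. \<pi> x \<noteq> x)} = subfact (card T)"
proof -
  obtain f where f: "bij_betw f {1..card T} T" using ex_bij_betw_nat_finite_1[OF assms] by blast
  from bij_betw_same_card[OF bij_betw_derangements[OF f]] show ?thesis
    unfolding subfact_def by simp
qed

lemma fix_set:
  assumes "S \<subseteq> players m"
  shows "{\<pi>. \<pi> permutes players m \<and> fixpts m \<pi> = S} =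
         {\<pi>. \<pi> permutes (players m - S) \<and> (\<forall>x\<in>players m - S. \<pi> x \<noteq> x)}"
proof (intro set_eqI iffI)
  fix \<pi> assume "\<pi> \<in> {\<pi>. \<pi> permutes players m \<and> fixpts m \<pi> = S}"
  then have p: "\<pi> permutes players m" and F: "fixpts m \<pi> = S" by auto
  have "\<pi> permutes (players m - S)"
    by (rule permutes_superset[OF p]) (use F in \<open>auto simp: fixpts_def\<close>)
  moreover have "\<forall>x\<in>players m - S. \<pi> x \<noteq> x" using F by (auto simp: fixpts_def)
  ultimately show "\<pi> \<in> {\<pi>. \<pi> permutes (players m - S) \<and> (\<forall>x\<in>players m - S. \<pi> x \<noteq> x)}" by simp
next
  fix \<pi> assume "\<pi> \<in> {\<pi>. \<pi> permutes (players m - S) \<and> (\<forall>x\<in>players m - S. \<pi> x \<noteq> x)}"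
  then have p: "\<pi> permutes (players m - S)" and d: "\<forall>x\<in>players m - S. \<pi> x \<noteq> x" by auto
  have "\<pi> permutes players m" by (rule permutes_subset[OF p]) auto
  moreover have "fixpts m \<pi> = S"
    using d assms permutes_not_in[OF p] by (auto simp: fixpts_def)
  ultimately show "\<pi> \<in> {\<pi>. \<pi> permutes players m \<and> fixpts m \<pi> = S}" by simp
qed

lemma fix_count:
  assumes "S \<subseteq> players m"
  shows "card {\<pi>. \<pi> permutes players m \<and> fixpts m \<pi> = S} = subfact (m - card S)"
proof -
  have "card (players m - S) = m - card S"
    using assms by (simp add: card_Diff_subset finite_subset players_def)
  then show ?thesis unfolding fix_set[OF assms]
    using derange_card[of "players m - S"] by (simp add: players_def)
qed

lemma sum_fix:
  "(\<Sum>\<pi>\<in>{\<pi>. \<pi> permutes players m}. (2::nat) ^ card (fixpts m \<pi>)) = Vcount m"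
proof -
  let ?Pm = "{\<pi>. \<pi> permutes players m}"
  have fin: "finite ?Pm" by (rule finite_permutations) (simp add: players_def)
  have finP: "finite (players m)" by (simp add: players_def)
  have "(\<Sum>\<pi>\<in>?Pm. (2::nat) ^ card (fixpts m \<pi>)) =
        (\<Sum>S\<in>Pow (players m). \<Sum>\<pi>\<in>{\<pi>\<in>?Pm. fixpts m \<pi> = S}. 2 ^ card (fixpts m \<pi>))"
    by (rule sum.group[symmetric]) (use fin finP in \<open>auto simp: fixpts_def\<close>)
  also have "\<dots> = (\<Sum>S\<in>Pow (players m). 2 ^ card S * subfact (m - card S))"
  proof (rule sum.cong[OF refl])
    fix S assume S: "S \<in> Pow (players m)"
    have "(\<Sum>\<pi>\<in>{\<pi>\<in>?Pm. fixpts m \<pi> = S}. (2::nat) ^ card (fixpts m \<pi>))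
        = (\<Sum>\<pi>\<in>{\<pi>. \<pi> permutes players m \<and> fixpts m \<pi> = S}. 2 ^ card S)"
      by (rule sum.cong) auto
    also have "\<dots> = 2 ^ card S * subfact (m - card S)"
      using fix_count[of S m] S by simp
    finally show "(\<Sum>\<pi>\<in>{\<pi>\<in>?Pm. fixpts m \<pi> = S}. (2::nat) ^ card (fixpts m \<pi>)) = 2 ^ card S * subfact (m - card S)" .
  qed
  also have "\<dots> = (\<Sum>l\<in>{0..m}. \<Sum>S\<in>{S\<in>Pow (players m). card S = l}. 2 ^ card S * subfact (m - card S))"
  proof (rule sum.group[symmetric])
    show "card ` Pow (players m) \<subseteq> {0..m}"
      using finP by (auto simp: players_def intro: card_mono[of "{1..m}", simplified])
  qed (use finP in auto)
  also have "\<dots> = (\<Sum>l=0..m. (m choose l) * 2 ^ l * subfact (m - l))"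
  proof (rule sum.cong[OF refl])
    fix l assume "l \<in> {0..m}"
    have "(\<Sum>S\<in>{S\<in>Pow (players m). card S = l}. (2::nat) ^ card S * subfact (m - card S))
       = (\<Sum>S\<in>{S\<in>Pow (players m). card S = l}. 2 ^ l * subfact (m - l))"
      by (rule sum.cong) auto
    also have "\<dots> = card {S. S \<subseteq> players m \<and> card S = l} * (2 ^ l * subfact (m - l))"
      by (simp add: Pow_def)
    also have "card {S. S \<subseteq> players m \<and> card S = l} = m choose l"
      using n_subsets[OF finP, of l] by (simp add: players_def)
    finally show "(\<Sum>S\<in>{S\<in>Pow (players m). card S = l}. (2::nat) ^ card S * subfact (m - card S)) = (m choose l) * 2 ^ l * subfact (m - l)"
      by simp
  qed
  finally show ?thesis unfolding Vcount_def .
qed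


lemma fin_players[simp]: "finite (players m)" by (simp add: players_def)

lemma lam_zero:
  assumes pg: "is_product_game m U v a" and g: "\<gamma> \<in> mixed_profiles m" and i: "i \<in> players m"
  shows "lam m U i \<gamma> = 0 \<longleftrightarrow> (\<exists>j\<in>players m - {i}. \<gamma> j = a i j)"
proof -
  have "lam m U i \<gamma> = (-1) ^ (v i) * (\<Prod>j\<in>players m - {i}. (\<gamma> j - a i j))"
    using pg g i unfolding is_product_game_def by blast
  then show ?thesis by simp
qed

lemma EC_card:
  assumes pg: "is_product_game m U v a" and p: "\<pi> permutes players m"
  shows "finite (EC m a \<pi>) \<and> card (EC m a \<pi>) = 2 ^ card (fixpts m \<pi>)"
proof -
  let ?P = "players m" and ?F = "fixpts m \<pi>"
  define E where "E b = (\<lambda>j. if j \<in> ?F then b j else if j \<in> ?P then a (\<pi> j) j else undefined)"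
    for b :: "nat \<Rightarrow> real"
  have FP: "?F \<subseteq> ?P" by (auto simp: fixpts_def)
  have aint: "0 < a (\<pi> j) j \<and> a (\<pi> j) j < 1" if "j \<in> ?P - ?F" for j
  proof -
    have "\<pi> j \<in> ?P" using p that by (simp add: permutes_in_image)
    moreover have "\<pi> j \<noteq> j" using that by (auto simp: fixpts_def)
    ultimately show ?thesis using pg that unfolding is_product_game_def by blast
  qed
  have img: "EC m a \<pi> = E ` (?F \<rightarrow>\<^sub>E {0, 1})"
  proof (intro set_eqI iffI)
    fix \<gamma> assume "\<gamma> \<in> EC m a \<pi>"
    then have g: "\<gamma> \<in> mixed_profiles m" and L: "Lset m \<gamma> = ?F"
      and c: "\<forall>j\<in>?P - ?F. \<gamma> j = a (\<pi> j) j" by (auto simp: EC_def)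
    have v01: "\<gamma> j \<in> {0, 1}" if j: "j \<in> ?F" for j
    proof -
      have "j \<in> Lset m \<gamma>" using L j by simp
      then show ?thesis by (simp add: Lset_def)
    qed
    have "restrict \<gamma> ?F \<in> ?F \<rightarrow>\<^sub>E {0, 1}"
      using v01 by (simp add: restrict_PiE_iff)
    moreover have "\<gamma> = E (restrict \<gamma> ?F)"
    proof
      fix j show "\<gamma> j = E (restrict \<gamma> ?F) j"
      proof (cases "j \<in> ?F")
        case True then show ?thesis by (simp add: E_def)
      next
        case nF: False
        show ?thesis
        proof (cases "j \<in> ?P")
          case True then show ?thesis using c nF by (simp add: E_def)
        next
          case False
          then have "\<gamma> j = undefined" using g PiE_arb[of \<gamma> ?P "\<lambda>_. {0..1}" j] by (simp add: mixed_profiles_def)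
          then show ?thesis using False nF by (simp add: E_def)
        qed
      qed
    qed
    ultimately show "\<gamma> \<in> E ` (?F \<rightarrow>\<^sub>E {0, 1})" by blast
  next
    fix \<gamma> assume "\<gamma> \<in> E ` (?F \<rightarrow>\<^sub>E {0, 1})"
    then obtain b where b: "b \<in> ?F \<rightarrow>\<^sub>E {0, 1}" and gb: "\<gamma> = E b" by blast
    have "\<gamma> \<in> mixed_profiles m"
      unfolding mixed_profiles_def gb PiE_iff
    proof
      show "\<forall>j\<in>?P. E b j \<in> {0..1}"
      proof
        fix j assume jP: "j \<in> ?P"
        show "E b j \<in> {0..1}"
        proof (cases "j \<in> ?F")
          case True
          then have "b j \<in> {0,1}" using b by blast
          then show ?thesis using True by (auto simp: E_def)
        next
          case False
          then show ?thesis using aint[of j] jP by (simp add: E_def)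
        qed
      qed
      show "E b \<in> extensional ?P" using FP by (auto simp: E_def extensional_def)
    qed
    moreover have "Lset m \<gamma> = ?F"
    proof (intro set_eqI iffI)
      fix j assume j: "j \<in> Lset m \<gamma>"
      hence jP: "j\<in>?P" and v: "\<gamma> j \<in> {0,1}" by (auto simp: Lset_def)
      show "j \<in> ?F"
      proof (rule ccontr)
        assume nf: "j \<notin> ?F"
        hence "\<gamma> j = a (\<pi> j) j" using jP by (simp add: gb E_def)
        with aint[of j] jP nf v show False by auto
      qed
    next
      fix j assume j: "j \<in> ?F"
      hence "\<gamma> j = b j" by (simp add: gb E_def)
      moreover have "b j \<in> {0,1}" using b j by blast
      ultimately show "j \<in> Lset m \<gamma>" using j FP by (auto simp: Lset_def)
    qed
    moreover have "\<forall>j\<in>?P - ?F. \<gamma> j = a (\<pi> j) j" by (auto simp: gb E_def)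
    ultimately show "\<gamma> \<in> EC m a \<pi>" by (simp add: EC_def)
  qed
  have inj: "inj_on E (?F \<rightarrow>\<^sub>E {0, 1})"
  proof
    fix b1 b2 assume b1: "b1 \<in> ?F \<rightarrow>\<^sub>E {0::real, 1}" and b2: "b2 \<in> ?F \<rightarrow>\<^sub>E {0::real, 1}"
      and e: "E b1 = E b2"
    show "b1 = b2"
    proof
      fix j show "b1 j = b2 j"
      proof (cases "j \<in> ?F")
        case True then show ?thesis using fun_cong[OF e, of j] by (simp add: E_def)
      next
        case False then show ?thesis using PiE_arb[OF b1 False] PiE_arb[OF b2 False] by simp
      qed
    qed
  qed
  have "card (?F \<rightarrow>\<^sub>E {0::real, 1}) = 2 ^ card ?F"
    using FP by (simp add: card_PiE finite_subset numeral_2_eq_2)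
  moreover have "finite (?F \<rightarrow>\<^sub>E {0::real, 1})"
    using FP by (simp add: finite_PiE finite_subset)
  ultimately show ?thesis using img inj by (simp add: card_image)
qed

lemma EC_disj:
  assumes pg: "is_product_game m U v a" and p1: "\<pi>1 permutes players m" and p2: "\<pi>2 permutes players m"
    and g1: "\<gamma> \<in> EC m a \<pi>1" and g2: "\<gamma> \<in> EC m a \<pi>2"
  shows "\<pi>1 = \<pi>2"
proof
  fix j
  have F: "fixpts m \<pi>1 = fixpts m \<pi>2" using g1 g2 by (simp add: EC_def)
  show "\<pi>1 j = \<pi>2 j"
  proof (cases "j \<in> players m")
    case False then show ?thesis using p1 p2 by (simp add: permutes_not_in)
  next
    case jP: True
    show ?thesis
    proof (cases "j \<in> fixpts m \<pi>1")
      case True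
      then have "j \<in> fixpts m \<pi>2" using F by simp
      with True show ?thesis by (simp add: fixpts_def)
    next
      case False
      then have n1: "\<pi>1 j \<noteq> j" and n2: "\<pi>2 j \<noteq> j" using F jP by (auto simp: fixpts_def)
      have "a (\<pi>1 j) j = a (\<pi>2 j) j" using g1 g2 False F jP by (auto simp: EC_def)
      moreover have "\<pi>1 j \<in> players m" "\<pi>2 j \<in> players m"
        using p1 p2 jP by (auto simp: permutes_in_image)
      ultimately show ?thesis using pg n1 n2 jP unfolding is_product_game_def by metis
    qed
  qed
qed

lemma derange_nash:
  assumes pg: "is_product_game m U v a" and p: "\<pi> permutes players m"
    and F: "fixpts m \<pi> = {}" and g: "\<gamma> \<in> EC m a \<pi>"
  shows "nash m U \<gamma>"
proof -
  have gm: "\<gamma> \<in> mixed_profiles m" and L: "Lset m \<gamma> = {}"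
    and c: "\<forall>j\<in>players m - fixpts m \<pi>. \<gamma> j = a (\<pi> j) j" using g F by (auto simp: EC_def)
  have "lam m U i \<gamma> = 0 \<and> \<gamma> i \<noteq> 0 \<and> \<gamma> i \<noteq> 1" if i: "i \<in> players m" for i
  proof -
    define j where "j = inv \<pi> i"
    have jP: "j \<in> players m" using p i by (simp add: j_def permutes_inv permutes_in_image)
    have pj: "\<pi> j = i" using p by (simp add: j_def permutes_inverses(1))
    have "j \<noteq> i" using F jP pj by (auto simp: fixpts_def)
    moreover have "\<gamma> j = a i j" using c F jP pj by auto
    ultimately have "lam m U i \<gamma> = 0" using lam_zero[OF pg gm i] jP by auto
    moreover have "\<gamma> i \<noteq> 0 \<and> \<gamma> i \<noteq> 1" using L i by (auto simp: Lset_def)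
    ultimately show ?thesis by blast
  qed
  then show ?thesis using gm by (simp add: nash_def)
qed

lemma nash_in_EC:
  assumes pg: "is_product_game m U v a" and n: "nash m U \<gamma>"
  shows "\<exists>\<pi>. \<pi> permutes players m \<and> \<gamma> \<in> EC m a \<pi>"
proof -
  let ?P = "players m"
  define I where "I = {i\<in>?P. \<gamma> i \<notin> {0,1}}"
  have gm: "\<gamma> \<in> mixed_profiles m" using n by (simp add: nash_def)
  have gr: "0 \<le> \<gamma> i \<and> \<gamma> i \<le> 1" if "i \<in> ?P" for i
    using gm that by (auto simp: mixed_profiles_def PiE_iff)
  have ex: "\<exists>j. j\<in>?P-{i} \<and> \<gamma> j = a i j" if iI: "i \<in> I" for i
  proof -
    have iP: "i \<in> ?P" and "0 < \<gamma> i" "\<gamma> i < 1" using iI gr[of i] by (auto simp: I_def)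
    then have "lam m U i \<gamma> = 0" using n by (auto simp: nash_def)
    then show ?thesis using lam_zero[OF pg gm iP] by blast
  qed
  define \<sigma> where "\<sigma> i = (SOME j. j\<in>?P-{i} \<and> \<gamma> j = a i j)" for i
  have s: "\<sigma> i \<in> ?P-{i} \<and> \<gamma> (\<sigma> i) = a i (\<sigma> i)" if "i \<in> I" for i
    unfolding \<sigma>_def using someI_ex[OF ex[OF that]] .
  have aint: "0 < a i j \<and> a i j < 1" if "i \<in> ?P" "j \<in> ?P" "i \<noteq> j" for i j
    using pg that unfolding is_product_game_def by blast
  have sI: "\<sigma> ` I \<subseteq> I"
  proof
    fix x assume "x \<in> \<sigma> ` I"
    then obtain i where i: "i \<in> I" and x: "x = \<sigma> i" by blast
    have "i \<in> ?P" using i by (simp add: I_def)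
    then have "0 < \<gamma> x \<and> \<gamma> x < 1" using s[OF i] aint[of i x] x by auto
    then show "x \<in> I" using s[OF i] x by (auto simp: I_def)
  qed
  have inj: "inj_on \<sigma> I"
  proof
    fix i1 i2 assume i1: "i1 \<in> I" and i2: "i2 \<in> I" and e: "\<sigma> i1 = \<sigma> i2"
    have "a i1 (\<sigma> i1) = a i2 (\<sigma> i1)" using s[OF i1] s[OF i2] e by simp
    moreover have "i1 \<in> ?P" "i2 \<in> ?P" using i1 i2 by (auto simp: I_def)
    moreover have "\<sigma> i1 \<in> ?P" "i1 \<noteq> \<sigma> i1" "i2 \<noteq> \<sigma> i1" using s[OF i1] s[OF i2] e by auto
    ultimately show "i1 = i2" using pg unfolding is_product_game_def by metis
  qed
  have finI: "finite I" by (simp add: I_def)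
  have bij: "bij_betw \<sigma> I I"
    using endo_inj_surj[OF finI sI inj] inj by (simp add: bij_betw_def)
  define \<pi> where "\<pi> j = (if j \<in> I then inv_into I \<sigma> j else j)" for j
  have bij2: "bij_betw \<pi> I I"
    using bij_betw_inv_into[OF bij] by (rule bij_betw_cong[THEN iffD1, rotated]) (simp add: \<pi>_def)
  have pI: "\<pi> permutes I" by (rule bij_imp_permutes[OF bij2]) (simp add: \<pi>_def)
  have pP: "\<pi> permutes ?P" by (rule permutes_subset[OF pI]) (auto simp: I_def)
  have key: "\<pi> j \<in> I \<and> \<sigma> (\<pi> j) = j" if "j \<in> I" for j
    using that bij unfolding \<pi>_def
    by (simp add: bij_betw_imp_surj_on f_inv_into_f inv_into_into)
  have F: "fixpts m \<pi> = Lset m \<gamma>"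
  proof (intro set_eqI iffI)
    fix j assume j: "j \<in> fixpts m \<pi>"
    show "j \<in> Lset m \<gamma>"
    proof (rule ccontr)
      assume "j \<notin> Lset m \<gamma>"
      then have jI: "j \<in> I" using j by (auto simp: I_def Lset_def fixpts_def)
      then have "\<sigma> j = j" using key[OF jI] j by (simp add: fixpts_def)
      then show False using s[OF jI] by simp
    qed
  next
    fix j assume "j \<in> Lset m \<gamma>"
    then show "j \<in> fixpts m \<pi>" by (auto simp: I_def Lset_def fixpts_def \<pi>_def)
  qed
  have "\<forall>j\<in>?P - fixpts m \<pi>. \<gamma> j = a (\<pi> j) j"
  proof
    fix j assume "j \<in> ?P - fixpts m \<pi>"
    then have jI: "j \<in> I" using F by (auto simp: I_def Lset_def)
    show "\<gamma> j = a (\<pi> j) j" using s[OF conjunct1[OF key[OF jI]]] key[OF jI] by simp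
  qed
  then have "\<gamma> \<in> EC m a \<pi>" using gm F by (simp add: EC_def)
  then show ?thesis using pP by blast
qed


theorem corollary4p5:
  fixes m :: nat and U :: "nat \<Rightarrow> (nat \<Rightarrow> nat) \<Rightarrow> real"
  assumes "m \<ge> 1"
    and "maximal_product_game m U"
  shows "finite {\<gamma>. nash m U \<gamma>} \<and>
         real (card {\<gamma>. nash m U \<gamma>}) = (real (Vcount m) + real (subfact m)) / 2"
proof -
  obtain v a where pg: "is_product_game m U v a" and mx:
    "\<forall>\<pi>. \<pi> permutes players m \<and> fixpts m \<pi> \<noteq> {} \<longrightarrow>
        2 * card {\<gamma> \<in> EC m a \<pi>. nash m U \<gamma>} = card (EC m a \<pi>)"
    using assms(2) unfolding maximal_product_game_def by blast
  let ?N = "{\<gamma>. nash m U \<gamma>}" and ?Pm = "{\<pi>. \<pi> permutes players m}"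
  define A where "A \<pi> = {\<gamma> \<in> EC m a \<pi>. nash m U \<gamma>}" for \<pi>
  have finPm: "finite ?Pm" by (rule finite_permutations) simp
  have NU: "?N = \<Union> (A ` ?Pm)"
    using nash_in_EC[OF pg] by (auto simp: A_def)
  have finA: "\<forall>\<pi>\<in>?Pm. finite (A \<pi>)"
    using EC_card[OF pg] by (auto simp: A_def)
  have disj: "\<forall>\<pi>1\<in>?Pm. \<forall>\<pi>2\<in>?Pm. \<pi>1 \<noteq> \<pi>2 \<longrightarrow> A \<pi>1 \<inter> A \<pi>2 = {}"
    using EC_disj[OF pg] by (auto simp: A_def)
  have finN: "finite ?N" unfolding NU using finPm finA by blast
  have cN: "card ?N = (\<Sum>\<pi>\<in>?Pm. card (A \<pi>))"
    unfolding NU by (rule card_UN_disjoint[OF finPm finA disj])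
  have cA: "2 * card (A \<pi>) = 2 ^ card (fixpts m \<pi>) + (if fixpts m \<pi> = {} then 1 else 0)"
    if p: "\<pi> \<in> ?Pm" for \<pi>
  proof (cases "fixpts m \<pi> = {}")
    case True
    have "A \<pi> = EC m a \<pi>" using derange_nash[OF pg _ True] p by (auto simp: A_def)
    then show ?thesis using EC_card[OF pg] p True by simp
  next
    case False
    then show ?thesis using mx p EC_card[OF pg] by (simp add: A_def)
  qed
  have "2 * card ?N = (\<Sum>\<pi>\<in>?Pm. 2 * card (A \<pi>))" by (simp add: cN sum_distrib_left)
  also have "\<dots> = (\<Sum>\<pi>\<in>?Pm. 2 ^ card (fixpts m \<pi>)) + (\<Sum>\<pi>\<in>?Pm. (if fixpts m \<pi> = {} then 1 else 0))"
    using cA by (simp add: sum.distrib)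
  also have "(\<Sum>\<pi>\<in>?Pm. (if fixpts m \<pi> = {} then 1 else 0)) = card {\<pi>\<in>?Pm. fixpts m \<pi> = {}}"
    using finPm by (simp add: sum.inter_filter[symmetric])
  also have "{\<pi>\<in>?Pm. fixpts m \<pi> = {}} = {\<pi>. \<pi> permutes {1..m} \<and> (\<forall>i\<in>{1..m}. \<pi> i \<noteq> i)}"
    by (auto simp: fixpts_def players_def)
  finally have "2 * card ?N = Vcount m + subfact m"
    by (simp add: sum_fix subfact_def)
  then have "real (2 * card ?N) = real (Vcount m + subfact m)" by simp
  then show ?thesis using finN by simp
qed

end
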